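(* Let $G$ be a reflexive topological group that respects compactness. Then the convergence group $\Gamma_c G$ is $g$-barrelled.
   Context: All groups are abelian. A convergence structure on a set $X$ assigns to each $x \in X$ a collection of filters on $X$, said to converge to $x$ (written $\mathcal F \to x$). This assignment must satisfy three conditions: the point ultrafilter $\dot x$ converges to $x$; if $\mathcal F \to x$ and $\mathcal G \to x$ then $\mathcal F \cap \mathcal G \to x$; and filters finer than a filter converging to $x$ converge to $x$. A map is continuous if it maps filters converging to $x$ to filters converging to the image of $x$. A convergence group is an abelian group with a convergence structure such that $\mathcal F \to x$, $\mathcal G \to y$ imply $\mathcal F - \mathcal G \to x-y$. Every topological group is a convergence group, with convergent filters being those finer than the neighbourhood filter. $\mathbb T = \mathbb R/\mathbb Z$. For convergence groups $G,H$, $\Gamma(G,H)$ is the group of continuous homomorphisms, and $\Gamma G = \Gamma(G,\mathbb T)$. $\Gamma_s(G,H)$ denotes $\Gamma(G,H)$ with the topology of pointwise convergence (the weak topology). $\Gamma_c(G,H)$ denotes $\Gamma(G,H)$ with the continuous convergence structure: $\Phi \to \varphi$ iff for every $\mathcal F \to x$ in $G$, the filter generated by $\{\{\psi(y):\psi \in A, y \in F\} : A \in \Phi, F \in \mathcal F\}$ converges to $\varphi(x)$ in $H$. Write $\Gamma_s G$, $\Gamma_c G$ when $H = \mathbb T$. A set $M \subseteq \Gamma(G,H)$ is equicontinuous if for every filter $\mathcal F \to 0$ in $G$, the filter $M(\mathcal F)$ converges to $0$ in $H$, where $M(\mathcal F)$ is generated by $\{\varphi(x) : \varphi \in M, x \in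 F\}$, $F \in \mathcal F$. A convergence group $G$ is $g$-barrelled if every compact subset of $\Gamma_s G$ is equicontinuous (as a subset of $\Gamma(G,\mathbb T)$). $G$ is reflexive if the canonical map $\kappa_G : G \to \Gamma_c\Gamma_c G$, $\kappa_G(x)(\varphi) = \varphi(x)$, is an isomorphism of convergence groups. A topological group $G$ respects compactness if every subset of $G$ compact in the weak topology $\sigma(G,\Gamma G)$ (the initial topology induced by all continuous characters) is compact in $G$. *)

theory Defs
  imports "HOL-Analysis.Analysis" "HOL-Algebra.Group"
begin

text \<open>A (abelian) group in the HOL-Algebra sense together with a convergence
relation: cv F x means that the filter F converges to x.\<close>

record 'a convgroup = "'a monoid" + cv :: "'a filter \<Rightarrow> 'a \<Rightarrow> bool"

definition filter_on :: "'a set \<Rightarrow> 'a filter \<Rightarrow> bool" where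
  "filter_on X F \<longleftrightarrow> F \<noteq> bot \<and> eventually (\<lambda>y. y \<in> X) F"

text \<open>F - H: the filter generated by the sets A - B (A in F, B in H).\<close>
definition filter_diff :: "('a, 'b) convgroup_scheme \<Rightarrow> 'a filter \<Rightarrow> 'a filter \<Rightarrow> 'a filter" where
  "filter_diff G F H = filtermap (\<lambda>(a, b). a \<otimes>\<^bsub>G\<^esub> inv\<^bsub>G\<^esub> b) (F \<times>\<^sub>F H)"

definition convergence_group :: "('a, 'b) convgroup_scheme \<Rightarrow> bool" where
  "convergence_group G \<longleftrightarrow> comm_group G
   \<and> (\<forall>F x. cv G F x \<longrightarrow> x \<in> carrier G \<and> filter_on (carrier G) F)
   \<and> (\<forall>x\<in>carrier G. cv G (principal {x}) x)
   \<and> (\<forall>F H x. cv G F x \<and> cv G H x \<longrightarrow> cv G (sup F H) x)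
   \<and> (\<forall>F F' x. cv G F x \<and> F' \<le> F \<and> F' \<noteq> bot \<longrightarrow> cv G F' x)
   \<and> (\<forall>F H x y. cv G F x \<and> cv G H y \<longrightarrow>
        cv G (filter_diff G F H) (x \<otimes>\<^bsub>G\<^esub> inv\<^bsub>G\<^esub> y))"

definition top_conv :: "'a topology \<Rightarrow> 'a filter \<Rightarrow> 'a \<Rightarrow> bool" where
  "top_conv \<tau> F x \<longleftrightarrow> x \<in> topspace \<tau> \<and> filter_on (topspace \<tau>) F \<and> F \<le> nhdsin \<tau> x"

definition topological_group :: "'a monoid \<Rightarrow> 'a topology \<Rightarrow> bool" where
  "topological_group G \<tau> \<longleftrightarrow> comm_group G \<and> topspace \<tau> = carrier G
   \<and> continuous_map (prod_topology \<tau> \<tau>) \<tau> (\<lambda>(x, y). x \<otimes>\<^bsub>G\<^esub> y)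
   \<and> continuous_map \<tau> \<tau> (\<lambda>x. inv\<^bsub>G\<^esub> x)"

definition top_cgroup :: "'a monoid \<Rightarrow> 'a topology \<Rightarrow> 'a convgroup" where
  "top_cgroup G \<tau> = \<lparr>carrier = carrier G, mult = mult G, one = one G, cv = top_conv \<tau>\<rparr>"

text \<open>T = R/Z is realised (isomorphically, via t \<mapsto> exp(2 pi i t)) as the
unit circle in the complex plane, with multiplication and its usual topology.\<close>

definition T_top :: "complex topology" where
  "T_top = top_of_set (sphere 0 1)"

definition Tgroup :: "complex convgroup" where
  "Tgroup = \<lparr>carrier = sphere 0 1, mult = (*), one = 1, cv = top_conv T_top\<rparr>"

definition cont_map :: "('a, 'c) convgroup_scheme \<Rightarrow> ('b, 'd) convgroup_scheme \<Rightarrow> ('a \<Rightarrow> 'b) \<Rightarrow> bool" where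
  "cont_map G H f \<longleftrightarrow> f \<in> carrier G \<rightarrow> carrier H
     \<and> (\<forall>F x. cv G F x \<longrightarrow> cv H (filtermap f F) (f x))"

text \<open>Evaluation filter: generated by the sets {psi y | psi in A, y in F}.\<close>
definition eval_filter :: "('a \<Rightarrow> 'b) filter \<Rightarrow> 'a filter \<Rightarrow> 'b filter" where
  "eval_filter \<Phi> F = filtermap (\<lambda>(\<psi>, y). \<psi> y) (\<Phi> \<times>\<^sub>F F)"

definition Gamma_c :: "('a, 'c) convgroup_scheme \<Rightarrow> ('b, 'd) convgroup_scheme \<Rightarrow> ('a \<Rightarrow> 'b) convgroup" where
  "Gamma_c G H =
     (let C = {f. f \<in> hom G H \<and> f \<in> extensional (carrier G) \<and> cont_map G H f}
      in \<lparr>carrier = C,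
          mult = (\<lambda>f g. \<lambda>x\<in>carrier G. f x \<otimes>\<^bsub>H\<^esub> g x),
          one = (\<lambda>x\<in>carrier G. \<one>\<^bsub>H\<^esub>),
          cv = (\<lambda>\<Phi> \<phi>. \<phi> \<in> C \<and> filter_on C \<Phi> \<and>
                 (\<forall>F x. cv G F x \<longrightarrow> cv H (eval_filter \<Phi> F) (\<phi> x)))\<rparr>)"

definition dual_c :: "('a, 'c) convgroup_scheme \<Rightarrow> ('a \<Rightarrow> complex) convgroup" where
  "dual_c G = Gamma_c G Tgroup"

definition dual_s_top :: "('a, 'c) convgroup_scheme \<Rightarrow> ('a \<Rightarrow> complex) topology" where
  "dual_s_top G = subtopology (product_topology (\<lambda>_. T_top) (carrier G)) (carrier (dual_c G))"

text \<open>Equicontinuity of M in Gamma(G,H).  The empty set is (vacuously)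
equicontinuous; otherwise M(F) is the filter generated by
{phi x | phi in M, x in F}.\<close>
definition equicontinuous :: "('a, 'c) convgroup_scheme \<Rightarrow> ('b, 'd) convgroup_scheme \<Rightarrow> ('a \<Rightarrow> 'b) set \<Rightarrow> bool" where
  "equicontinuous G H M \<longleftrightarrow> M \<subseteq> carrier (Gamma_c G H) \<and>
     (M = {} \<or> (\<forall>F. cv G F \<one>\<^bsub>G\<^esub> \<longrightarrow> cv H (eval_filter (principal M) F) \<one>\<^bsub>H\<^esub>))"

definition g_barrelled :: "('a, 'c) convgroup_scheme \<Rightarrow> bool" where
  "g_barrelled G \<longleftrightarrow> (\<forall>M. compactin (dual_s_top G) M \<longrightarrow> equicontinuous G Tgroup M)"

definition kappa :: "('a, 'c) convgroup_scheme \<Rightarrow> 'a \<Rightarrow> (('a \<Rightarrow> complex) \<Rightarrow> complex)" where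
  "kappa G = (\<lambda>x\<in>carrier G. \<lambda>\<phi>\<in>carrier (dual_c G). \<phi> x)"

definition reflexive :: "('a, 'c) convgroup_scheme \<Rightarrow> bool" where
  "reflexive G \<longleftrightarrow> kappa G \<in> iso G (dual_c (dual_c G))
     \<and> cont_map G (dual_c (dual_c G)) (kappa G)
     \<and> cont_map (dual_c (dual_c G)) G (inv_into (carrier G) (kappa G))"

definition weak_top :: "'a monoid \<Rightarrow> 'a topology \<Rightarrow> 'a topology" where
  "weak_top G \<tau> = pullback_topology (carrier G)
     (\<lambda>x. \<lambda>\<phi>\<in>carrier (dual_c (top_cgroup G \<tau>)). \<phi> x)
     (product_topology (\<lambda>_. T_top) (carrier (dual_c (top_cgroup G \<tau>))))"

definition respects_compactness :: "'a monoid \<Rightarrow> 'a topology \<Rightarrow> bool" where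
  "respects_compactness G \<tau> \<longleftrightarrow>
     (\<forall>K. K \<subseteq> carrier G \<and> compactin (weak_top G \<tau>) K \<longrightarrow> compactin \<tau> K)"

end

theory Submission
  imports Defs
begin

lemma compactin_pullback_aux:
  assumes "compactin T (f ` K)" "K \<subseteq> A"
  shows "compactin (pullback_topology A f T) K"
proof -
  have sub: "f ` K \<subseteq> topspace T" using assms(1) compactin_subset_topspace by blast
  show ?thesis unfolding compactin_def
  proof (intro conjI allI impI)
    show "K \<subseteq> topspace (pullback_topology A f T)"
      using sub assms(2) by (auto simp: topspace_pullback_topology)
  next
    fix \<U> assume h: "(\<forall>B\<in>\<U>. openin (pullback_topology A f T) B) \<and> K \<subseteq> \<Union>\<U>"
    have "\<forall>B\<in>\<U>. \<exists>U. openin T U \<and> B = f-`U \<inter> A"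
      using h by (simp add: openin_pullback_topology)
    then obtain g where g: "\<And>B. B \<in> \<U> \<Longrightarrow> openin T (g B) \<and> B = f-`(g B) \<inter> A"
      by metis
    have "f ` K \<subseteq> \<Union>(g ` \<U>)"
    proof
      fix y assume "y \<in> f ` K"
      then obtain k where k: "k \<in> K" "y = f k" by auto
      then obtain B where "B \<in> \<U>" "k \<in> B" using h by auto
      then show "y \<in> \<Union>(g ` \<U>)" using g[of B] k by auto
    qed
    moreover have "\<forall>B\<in>g ` \<U>. openin T B" using g by auto
    ultimately obtain \<V> where V: "finite \<V>" "\<V> \<subseteq> g ` \<U>" "f ` K \<subseteq> \<Union>\<V>"
      using assms(1) unfolding compactin_def by meson
    then obtain \<W> where W: "\<W> \<subseteq> \<U>" "finite \<W>" "\<V> = g ` \<W>"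
      by (meson finite_subset_image)
    have "K \<subseteq> \<Union>\<W>"
    proof
      fix k assume k: "k \<in> K"
      then obtain B where "B \<in> \<W>" "f k \<in> g B" using V W by auto
      then show "k \<in> \<Union>\<W>" using g[of B] W k assms(2) by auto
    qed
    then show "\<exists>\<F>. finite \<F> \<and> \<F> \<subseteq> \<U> \<and> K \<subseteq> \<Union>\<F>" using W by blast
  qed
qed

lemma carrier_dual_c: "carrier (dual_c G) = {f. f \<in> hom G Tgroup \<and> f \<in> extensional (carrier G) \<and> cont_map G Tgroup f}"
  by (simp add: dual_c_def Gamma_c_def Let_def)

lemma cv_dual_c: "cv (dual_c G) \<Phi> \<phi> \<longleftrightarrow> \<phi> \<in> carrier (dual_c G) \<and> filter_on (carrier (dual_c G)) \<Phi> \<and>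
   (\<forall>F x. cv G F x \<longrightarrow> cv Tgroup (eval_filter \<Phi> F) (\<phi> x))"
  by (simp add: dual_c_def Gamma_c_def Let_def)

lemma one_dual_c: "one (dual_c G) = (\<lambda>x\<in>carrier G. 1)"
  by (simp add: dual_c_def Gamma_c_def Let_def Tgroup_def)

lemma topspace_T: "topspace T_top = sphere 0 1"
  by (simp add: T_top_def)

lemma top_conv_nhdsin:
  assumes "x \<in> topspace \<tau>" shows "top_conv \<tau> (nhdsin \<tau> x) x"
proof -
  have "nhdsin \<tau> x \<noteq> bot"
  proof
    assume "nhdsin \<tau> x = bot"
    then have "eventually (\<lambda>_. False) (nhdsin \<tau> x)" by simp
    then show False using assms by (auto simp: eventually_nhdsin)
  qed
  moreover have "eventually (\<lambda>y. y \<in> topspace \<tau>) (nhdsin \<tau> x)"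
    using assms by (auto simp: eventually_nhdsin intro!: exI[of _ "topspace \<tau>"])
  ultimately show ?thesis using assms by (simp add: top_conv_def filter_on_def)
qed

theorem proposition2p5:
  fixes G :: "'a monoid" and \<tau> :: "'a topology"
  assumes "topological_group G \<tau>"
    and "reflexive (top_cgroup G \<tau>)"
    and "respects_compactness G \<tau>"
  shows "g_barrelled (dual_c (top_cgroup G \<tau>))"
proof -
  let ?Gc = "top_cgroup G \<tau>"
  define D where "D = dual_c ?Gc"
  have cG: "carrier ?Gc = carrier G" by (simp add: top_cgroup_def)
  have cvGc: "cv ?Gc = top_conv \<tau>" by (simp add: top_cgroup_def)
  have top1: "topspace \<tau> = carrier G" using assms(1) by (simp add: topological_group_def)
  from assms(2) have iso: "kappa ?Gc \<in> iso ?Gc (dual_c D)" unfolding reflexive_def D_def by simp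
  hence bij: "bij_betw (kappa ?Gc) (carrier G) (carrier (dual_c D))" by (simp add: iso_def cG)
  have kap: "\<And>x. x \<in> carrier G \<Longrightarrow> kappa ?Gc x = (\<lambda>\<phi>\<in>carrier D. \<phi> x)"
    by (simp add: kappa_def cG D_def)
  show ?thesis unfolding g_barrelled_def D_def[symmetric]
  proof (intro allI impI)
    fix M assume Mc: "compactin (dual_s_top D) M"
    have Msub: "M \<subseteq> carrier (dual_c D)"
      using compactin_subset_topspace[OF Mc] by (auto simp: dual_s_top_def)
    have Mprod: "compactin (product_topology (\<lambda>_. T_top) (carrier D)) M"
      using Mc by (simp add: dual_s_top_def compactin_subtopology)
    define K where "K = {x \<in> carrier G. kappa ?Gc x \<in> M}"
    have MK: "M = kappa ?Gc ` K" using bij Msub by (auto simp: K_def bij_betw_def)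
    have MK2: "M = (\<lambda>x. \<lambda>\<phi>\<in>carrier D. \<phi> x) ` K"
      unfolding MK by (rule image_cong) (auto simp: K_def kap)
    have Ksub: "K \<subseteq> carrier G" by (auto simp: K_def)
    have Kw0: "compactin (pullback_topology (carrier G) (\<lambda>x. \<lambda>\<phi>\<in>carrier D. \<phi> x) (product_topology (\<lambda>_. T_top) (carrier D))) K"
      by (rule compactin_pullback_aux) (fact Mprod[unfolded MK2], fact Ksub)
    have Kw: "compactin (weak_top G \<tau>) K"
      using Kw0 unfolding weak_top_def D_def .
    have Kc: "compactin \<tau> K" using assms(3) Kw Ksub unfolding respects_compactness_def by blast
    show "equicontinuous D Tgroup M"
      unfolding equicontinuous_def
    proof (intro conjI)
      show "M \<subseteq> carrier (Gamma_c D Tgroup)" using Msub by (simp add: dual_c_def)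
      show "M = {} \<or> (\<forall>F. cv D F \<one>\<^bsub>D\<^esub> \<longrightarrow> cv Tgroup (eval_filter (principal M) F) \<one>\<^bsub>Tgroup\<^esub>)"
      proof (cases "M = {}")
        case True then show ?thesis by simp
      next
        case ne: False
        have "\<forall>\<Phi>. cv D \<Phi> \<one>\<^bsub>D\<^esub> \<longrightarrow> cv Tgroup (eval_filter (principal M) \<Phi>) \<one>\<^bsub>Tgroup\<^esub>"
        proof (intro allI impI)
          fix \<Phi> assume cvP: "cv D \<Phi> \<one>\<^bsub>D\<^esub>"
          have PhiC: "filter_on (carrier D) \<Phi>"
            using cvP unfolding D_def cv_dual_c by simp
          have conv: "\<And>F x. top_conv \<tau> F x \<Longrightarrow> top_conv T_top (eval_filter \<Phi> F) 1"
          proof -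
            fix F x assume h: "top_conv \<tau> F x"
            then have x: "x \<in> carrier G" using top1 by (simp add: top_conv_def)
            have "cv Tgroup (eval_filter \<Phi> F) (\<one>\<^bsub>D\<^esub> x)"
              using cvP h unfolding D_def cv_dual_c cvGc by blast
            then show "top_conv T_top (eval_filter \<Phi> F) 1"
              using x by (simp add: D_def one_dual_c cG Tgroup_def)
          qed
          have hom: "\<And>\<psi> \<phi>. \<psi> \<in> M \<Longrightarrow> \<phi> \<in> carrier D \<Longrightarrow> \<psi> \<phi> \<in> sphere 0 1"
          proof -
            fix \<psi> \<phi> assume "\<psi> \<in> M" "\<phi> \<in> carrier D"
            then have "\<psi> \<in> hom D Tgroup" using Msub by (auto simp: carrier_dual_c)
            then show "\<psi> \<phi> \<in> sphere 0 1" using \<open>\<phi> \<in> carrier D\<close>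
              by (auto simp: hom_def Tgroup_def)
          qed
          have key: "\<And>V. openin T_top V \<Longrightarrow> 1 \<in> V \<Longrightarrow> eventually (\<lambda>\<phi>. \<forall>x\<in>K. \<phi> x \<in> V) \<Phi>"
          proof -
            fix V assume V: "openin T_top V" "1 \<in> V"
            have loc: "\<forall>x\<in>K. \<exists>U P. openin \<tau> U \<and> x \<in> U \<and> eventually P \<Phi> \<and>
                         (\<forall>\<phi> y. P \<phi> \<longrightarrow> y \<in> U \<longrightarrow> \<phi> y \<in> V)"
            proof
              fix x assume "x \<in> K"
              then have xt: "x \<in> topspace \<tau>" using Ksub top1 by auto
              have "top_conv T_top (eval_filter \<Phi> (nhdsin \<tau> x)) 1"
                by (rule conv[OF top_conv_nhdsin[OF xt]])
              then have le: "eval_filter \<Phi> (nhdsin \<tau> x) \<le> nhdsin T_top 1"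
                by (simp add: top_conv_def)
              have "eventually (\<lambda>z. z \<in> V) (nhdsin T_top 1)"
                using V by (auto simp: eventually_nhdsin)
              then have "eventually (\<lambda>z. z \<in> V) (eval_filter \<Phi> (nhdsin \<tau> x))"
                using le filter_leD by blast
              then obtain P Q where PQ: "eventually P \<Phi>" "eventually Q (nhdsin \<tau> x)"
                "\<forall>\<phi> y. P \<phi> \<longrightarrow> Q y \<longrightarrow> \<phi> y \<in> V"
                by (auto simp: eval_filter_def eventually_filtermap eventually_prod_filter)
              then obtain U where U: "openin \<tau> U" "x \<in> U" "\<forall>y\<in>U. Q y"
                using xt by (auto simp: eventually_nhdsin)
              show "\<exists>U P. openin \<tau> U \<and> x \<in> U \<and> eventually P \<Phi> \<and>
                         (\<forall>\<phi> y. P \<phi> \<longrightarrow> y \<in> U \<longrightarrow> \<phi> y \<in> V)"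
                using PQ U by blast
            qed
            then obtain U P where UP: "\<And>x. x \<in> K \<Longrightarrow> openin \<tau> (U x) \<and> x \<in> U x \<and> eventually (P x) \<Phi> \<and>
                         (\<forall>\<phi> y. P x \<phi> \<longrightarrow> y \<in> U x \<longrightarrow> \<phi> y \<in> V)"
              by metis
            have "\<forall>B\<in>U ` K. openin \<tau> B" "K \<subseteq> \<Union>(U ` K)" using UP by auto
            then obtain \<V> where "finite \<V>" "\<V> \<subseteq> U ` K" "K \<subseteq> \<Union>\<V>"
              using Kc unfolding compactin_def by meson
            then obtain F where F: "F \<subseteq> K" "finite F" "K \<subseteq> \<Union>(U ` F)"
              by (metis finite_subset_image)
            have "eventually (\<lambda>\<phi>. \<forall>x\<in>F. P x \<phi>) \<Phi>"
              using F UP by (intro eventually_ball_finite) auto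
            then show "eventually (\<lambda>\<phi>. \<forall>x\<in>K. \<phi> x \<in> V) \<Phi>"
            proof (rule eventually_mono)
              fix \<phi> assume a: "\<forall>x\<in>F. P x \<phi>"
              show "\<forall>x\<in>K. \<phi> x \<in> V"
              proof
                fix k assume "k \<in> K"
                then obtain x where "x \<in> F" "k \<in> U x" using F by auto
                then show "\<phi> k \<in> V" using UP[of x] a F by auto
              qed
            qed
          qed
          have PhiCev: "eventually (\<lambda>\<phi>. \<phi> \<in> carrier D) \<Phi>" and Pnb: "\<Phi> \<noteq> bot"
            using PhiC by (auto simp: filter_on_def)
          have "top_conv T_top (eval_filter (principal M) \<Phi>) 1"
            unfolding top_conv_def
          proof (intro conjI)
            show "1 \<in> topspace T_top" by (simp add: topspace_T)
            show "filter_on (topspace T_top) (eval_filter (principal M) \<Phi>)"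
              unfolding filter_on_def topspace_T
            proof
              show "eval_filter (principal M) \<Phi> \<noteq> bot"
                using ne Pnb by (simp add: eval_filter_def filtermap_bot_iff prod_filter_eq_bot principal_eq_bot_iff)
              show "eventually (\<lambda>y. y \<in> sphere 0 1) (eval_filter (principal M) \<Phi>)"
                unfolding eval_filter_def eventually_filtermap eventually_prod_filter
                using hom PhiCev by (auto intro!: exI[of _ "\<lambda>\<psi>. \<psi> \<in> M"] simp: eventually_principal)
            qed
            show "eval_filter (principal M) \<Phi> \<le> nhdsin T_top 1"
            proof (rule filter_leI)
              fix Pr assume "eventually Pr (nhdsin T_top 1)"
              then obtain V where V: "openin T_top V" "1 \<in> V" "\<forall>z\<in>V. Pr z"
                by (auto simp: eventually_nhdsin topspace_T)
              have ev: "eventually (\<lambda>\<phi>. \<phi> \<in> carrier D \<and> (\<forall>x\<in>K. \<phi> x \<in> V)) \<Phi>"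
                using key[OF V(1,2)] PhiCev by (auto intro: eventually_conj)
              show "eventually Pr (eval_filter (principal M) \<Phi>)"
                unfolding eval_filter_def eventually_filtermap eventually_prod_filter
              proof (intro exI conjI)
                show "eventually (\<lambda>\<psi>. \<psi> \<in> M) (principal M)" by (simp add: eventually_principal)
                show "eventually (\<lambda>\<phi>. \<phi> \<in> carrier D \<and> (\<forall>x\<in>K. \<phi> x \<in> V)) \<Phi>" by (rule ev)
                show "\<forall>\<psi> \<phi>. \<psi> \<in> M \<longrightarrow> \<phi> \<in> carrier D \<and> (\<forall>x\<in>K. \<phi> x \<in> V) \<longrightarrow> Pr (case (\<psi>, \<phi>) of (\<psi>, y) \<Rightarrow> \<psi> y)"
                  using V(3) by (auto simp: MK2)
              qed
            qed
          qed
          then show "cv Tgroup (eval_filter (principal M) \<Phi>) \<one>\<^bsub>Tgroup\<^esub>"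
            by (simp add: Tgroup_def)
        qed
        then show ?thesis by blast
      qed
    qed
  qed
qed

end
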